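(* Let $0<\lambda<1$ and $0<p<1$. Let \[ f(z)=\frac{z}{1-\frac{z}{p}+\lambda z\int_z^p\omega(t)\,dt}, \] where $\omega$ is analytic in $\mathbb{D}=\{z:|z|<1\}$ with $|\omega(z)|\le1$ on $\mathbb{D}$ (so $f\in\mathcal{U}_m(\lambda)$ has a simple pole at $z=p$), and let $f(z)=\sum_{k=-1}^\infty b_k(z-p)^k$ be its Laurent series at $z=p$. Then: (i) If $p\in\left(0,\frac{\sqrt{17}-1}{4}\right]$, then $|b_0|\le \frac{p}{(1-\lambda p^2)^2}$. (ii) If $p\in\left(\frac{\sqrt{17}-1}{4},1\right)$ and $\lambda\in\left[\frac{2p^2+p-2}{p^3},1\right)$, then $|b_0|\le \frac{p}{(1-\lambda p^2)^2}$. (iii) If $p\in\left(\frac{\sqrt{17}-1}{4},1\right)$ and $\lambda\in\left(0,\frac{2p^2+p-2}{p^3}\right)$, then \[ |b_0|\le \frac{p}{2(1-p^2)}\cdot\frac{\lambda p^3-2p^2+2}{1-\lambda p(\lambda p^3-2p^2+2)}. \] Equality in (i) and (ii) occurs for $\omega(z)\equiv-1$, while equality in (iii) is attained for $\omega(z)=-\frac{a+z}{1+az}$, where $a\in(-p,1)$ is chosen such that $\frac{a+p}{1+ap}=\frac{2-2p^2+\lambda p^3}{p}$.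
   Context: For $\lambda\in(0,1)$ and $p\in(0,1)$, $\mathcal{U}_m(\lambda)$ denotes the family of functions $f$ meromorphic in $\mathbb{D}$ with a pole at $z=p$, having a Taylor expansion $f(z)=z+\sum_{k=2}^\infty a_k z^k$ for $|z|<p$, and satisfying $\left|\frac{z}{f(z)}-z\left(\frac{z}{f(z)}\right)'-1\right|<\lambda$ for every $z\in\mathbb{D}$. The integral is along any path in $\mathbb{D}$ from $z$ to $p$. *)

theory Defs
  imports "HOL-Complex_Analysis.Complex_Analysis"
begin

text \<open>The function f(z) = z / (1 - z/p + lam z \<integral>_z^p \<omega>(t) dt); the integral is taken
  along the straight segment from z to p (path independent in the disc, which is convex).\<close>
definition Uf :: "real \<Rightarrow> real \<Rightarrow> (complex \<Rightarrow> complex) \<Rightarrow> complex \<Rightarrow> complex" where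
  "Uf lam p \<omega> z = z / (1 - z / of_real p
      + of_real lam * z * contour_integral (linepath z (of_real p)) \<omega>)"

definition b0 :: "real \<Rightarrow> real \<Rightarrow> (complex \<Rightarrow> complex) \<Rightarrow> complex" where
  "b0 lam p \<omega> = fls_nth (laurent_expansion (Uf lam p \<omega>) (of_real p)) 0"

end

theory Submission
  imports Defs
begin

lemma lp_lt1:
  fixes lam p :: real
  assumes "0 < lam" "lam < 1" "0 < p" "p < 1"
  shows "lam * p^2 < 1"
proof -
  have "p^2 < 1" using assms by (simp add: abs_square_less_1)
  hence "lam * p^2 < 1 * 1" using assms by (intro mult_strict_mono) auto
  thus ?thesis by simp
qed

lemma solve2:
  fixes x y g h c :: complex
  assumes g: "g \<noteq> 0" and e1: "x * g = c" and e2: "x * h + y * g = 1"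
  shows "y = (g - c * h) / g^2"
proof -
  have x: "x = c / g" using e1 g by (simp add: eq_divide_eq)
  have "y * g = 1 - x * h" using e2 by (simp add: algebra_simps)
  hence "y = (1 - x * h) / g" using g by (simp add: eq_divide_eq)
  also have "\<dots> = (g - c * h) / g^2" unfolding x using g
    by (simp add: divide_simps power2_eq_square)
  finally show ?thesis .
qed

lemma coeff_lemma:
  fixes Gs :: "complex fps" and c :: complex
  assumes g0: "Gs $ 0 = 0" and g1: "Gs $ 1 \<noteq> 0"
  shows "fls_nth (fps_to_fls (fps_const c + fps_X) / fps_to_fls Gs) 0
          = (Gs $ 1 - c * Gs $ 2) / (Gs $ 1)^2"
proof -
  define Hs where "Hs = fps_shift 1 Gs"
  have sd: "1 \<le> subdegree Gs"
  proof -
    have "Gs \<noteq> 0" using g1 by auto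
    hence "subdegree Gs \<noteq> 0" using g0 by (simp add: subdegree_eq_0_iff)
    thus ?thesis by simp
  qed
  have GH: "Gs = Hs * fps_X" unfolding Hs_def using fps_shift_times_fps_X[OF sd] by simp
  have H0: "Hs $ 0 = Gs $ 1" "Hs $ 1 = Gs $ 2" unfolding Hs_def by (simp_all add: numeral_2_eq_2)
  define P where "P = fps_const c + fps_X"
  have "fps_to_fls P / fps_to_fls Gs = (fps_to_fls P / fps_to_fls Hs) / fls_X"
    unfolding GH fls_times_fps_to_fls fps_X_to_fls by (rule divide_divide_eq_left[symmetric])
  also have "fps_to_fls P / fps_to_fls Hs = fps_to_fls (P / Hs)"
    using H0 g1 by (intro fls_divide_fps_to_fls) (simp add: subdegree_eq_0)
  finally have e: "fls_nth (fps_to_fls P / fps_to_fls Gs) 0 = (P / Hs) $ 1"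
    by simp
  define R where "R = P / Hs"
  have RH: "R * Hs = P" unfolding R_def using H0 g1
    by (simp add: fps_divide_unit inverse_mult_eq_1 mult.assoc)
  have P0: "P $ 0 = c" "P $ 1 = 1" by (simp_all add: P_def)
  have "(R*Hs) $ 0 = R$0 * Hs$0" by (rule fps_mult_nth_0)
  hence a1: "R$0 * Gs$1 = c" using RH P0 H0 by simp
  have "(R*Hs) $ 1 = R$0 * Hs$1 + R$1 * Hs$0" by (rule fps_mult_nth_1)
  hence a2: "R$0 * Gs$2 + R$1 * Gs$1 = 1" using RH P0 H0 by metis
  note a = a1 a2
  have "R $ 1 = (Gs $ 1 - c * Gs $ 2) / (Gs $ 1)^2"
    using solve2[OF g1 a1 a2] .
  thus ?thesis using e by (simp add: R_def P_def)
qed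
lemma b0_formula:
  fixes lam p :: real and \<omega> :: "complex \<Rightarrow> complex"
  assumes lam: "0 < lam" "lam < 1"
    and p: "0 < p" "p < 1"
    and hol: "\<omega> holomorphic_on ball 0 1"
    and wp: "norm (\<omega> (of_real p)) \<le> 1"
  shows "b0 lam p \<omega> = of_real p * (-1 + of_real lam * of_real p ^ 3 * deriv \<omega> (of_real p) / 2)
           / (1 + of_real lam * of_real p ^ 2 * \<omega> (of_real p))^2"
proof -
  define pc where "pc = (of_real p :: complex)"
  define lc where "lc = (of_real lam :: complex)"
  have pc0: "pc \<noteq> 0" using p by (simp add: pc_def)
  have pin: "pc \<in> ball 0 1" using p by (simp add: pc_def)
  obtain F where Fw: "\<And>x. x \<in> ball 0 1 \<Longrightarrow> (F has_field_derivative \<omega> x) (at x within ball 0 1)"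
  proof (rule holomorphic_convex_primitive'[OF convex_ball open_ball hol])
    fix g assume "\<And>x. x \<in> ball 0 1 \<Longrightarrow> (g has_field_derivative \<omega> x) (at x within ball 0 1)"
    thus thesis by (rule that)
  qed
  have Fat: "(F has_field_derivative \<omega> x) (at x)" if "x \<in> ball 0 1" for x
  proof -
    have e: "at x within ball 0 1 = at x" by (rule at_within_open[OF that open_ball])
    show ?thesis using Fw[OF that] unfolding e .
  qed
  have ci: "contour_integral (linepath z pc) \<omega> = F pc - F z" if "z \<in> ball 0 1" for z
  proof -
    have "path_image (linepath z pc) \<subseteq> ball 0 1"
      using that pin by (simp add: closed_segment_subset convex_ball)
    hence "(\<omega> has_contour_integral (F (pathfinish (linepath z pc)) - F (pathstart (linepath z pc)))) (linepath z pc)"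
      by (intro contour_integral_primitive[OF Fw]) auto
    thus ?thesis by (simp add: contour_integral_unique)
  qed
  define G where "G = (\<lambda>z. 1 - z / pc + lc * z * (F pc - F z))"
  have Ueq: "Uf lam p \<omega> z = z / G z" if "z \<in> ball 0 1" for z
    using ci[OF that] by (simp add: Uf_def G_def pc_def lc_def)
  have holF: "F holomorphic_on ball 0 1"
    unfolding holomorphic_on_open[OF open_ball] using Fat by blast
  have holG: "G holomorphic_on ball 0 1"
    unfolding G_def using pc0 by (auto intro!: holomorphic_intros holF)
  have anaG: "G analytic_on {pc}"
    using holG pin analytic_on_open analytic_on_subset by (metis empty_subsetI insert_subset open_ball)
  define Gs where "Gs = fps_expansion G pc"
  have fpsG: "(\<lambda>x. G (pc + x)) has_fps_expansion Gs"
    unfolding Gs_def by (rule analytic_at_imp_has_fps_expansion[OF anaG])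
  have lauN: "(\<lambda>x. pc + x) has_laurent_expansion fps_to_fls (fps_const pc + fps_X)"
    by (intro has_laurent_expansion_fps fps_expansion_intros)
  have lauQ: "(\<lambda>x. (pc + x) / G (pc + x)) has_laurent_expansion
                 fps_to_fls (fps_const pc + fps_X) / fps_to_fls Gs"
    by (intro has_laurent_expansion_divide lauN has_laurent_expansion_fps fpsG)
  have ev: "eventually (\<lambda>x. Uf lam p \<omega> x = x / G x) (at pc)"
    using eventually_at_in_open'[OF open_ball pin] by eventually_elim (simp add: Ueq)
  have lauU: "(\<lambda>x. Uf lam p \<omega> (pc + x)) has_laurent_expansion
                 fps_to_fls (fps_const pc + fps_X) / fps_to_fls Gs"
    using lauQ has_laurent_expansion_cong'[OF ev refl refl] by simp
  have b0eq: "b0 lam p \<omega> = fls_nth (fps_to_fls (fps_const pc + fps_X) / fps_to_fls Gs) 0"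
    unfolding b0_def using laurent_expansion_eqI[OF lauU] by (simp add: pc_def)
  define D where "D = (\<lambda>z. -1/pc + lc * (F pc - F z) - lc * z * \<omega> z)"
  have dG: "(G has_field_derivative D z) (at z)" if "z \<in> ball 0 1" for z
  proof -
    have d1: "((\<lambda>x. 1 - x / pc) has_field_derivative 0 - 1 / pc) (at z)"
      by (rule DERIV_diff[OF DERIV_const DERIV_cdivide[OF DERIV_ident]])
    have d2: "((\<lambda>x. lc * x * (F pc - F x)) has_field_derivative
                lc * z * (0 - \<omega> z) + lc * 1 * (F pc - F z)) (at z)"
      by (rule DERIV_mult'[OF DERIV_cmult[OF DERIV_ident] DERIV_diff[OF DERIV_const Fat[OF that]]])
    have "(G has_field_derivative (0 - 1 / pc) + (lc * z * (0 - \<omega> z) + lc * 1 * (F pc - F z))) (at z)"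
      unfolding G_def by (rule DERIV_add[OF d1 d2])
    thus ?thesis by (rule DERIV_cong) (simp add: D_def algebra_simps)
  qed
  have derG: "deriv G z = D z" if "z \<in> ball 0 1" for z
    using dG[OF that] by (rule DERIV_imp_deriv)
  have evD: "eventually (\<lambda>z. deriv G z = D z) (nhds pc)"
    using eventually_nhds_in_open[OF open_ball pin] by eventually_elim (simp add: derG)
  have "\<omega> field_differentiable at pc"
    using hol pin holomorphic_on_imp_differentiable_at by blast
  hence dw: "(\<omega> has_field_derivative deriv \<omega> pc) (at pc)"
    by (simp add: DERIV_deriv_iff_field_differentiable)
  have dD: "(D has_field_derivative (- 2 * lc * \<omega> pc - lc * pc * deriv \<omega> pc)) (at pc)"
  proof -
    have d1: "((\<lambda>x. -1/pc + lc * (F pc - F x)) has_field_derivative 0 + lc * (0 - \<omega> pc)) (at pc)"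
      by (rule DERIV_add[OF DERIV_const DERIV_cmult[OF DERIV_diff[OF DERIV_const Fat[OF pin]]]])
    have d2: "((\<lambda>x. lc * x * \<omega> x) has_field_derivative lc * pc * deriv \<omega> pc + lc * 1 * \<omega> pc) (at pc)"
      by (rule DERIV_mult'[OF DERIV_cmult[OF DERIV_ident] dw])
    have "(D has_field_derivative (0 + lc * (0 - \<omega> pc)) - (lc * pc * deriv \<omega> pc + lc * 1 * \<omega> pc)) (at pc)"
      unfolding D_def by (rule DERIV_diff[OF d1 d2])
    thus ?thesis by (rule DERIV_cong) (simp add: algebra_simps)
  qed
  have G0: "Gs $ 0 = 0" using pc0 by (simp add: Gs_def fps_expansion_def G_def)
  have G1: "Gs $ 1 = - 1 / pc - lc * pc * \<omega> pc"
    using derG[OF pin] by (simp add: Gs_def fps_expansion_def D_def)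
  have "deriv (deriv G) pc = deriv D pc" by (rule deriv_cong_ev[OF evD refl])
  also have "\<dots> = - 2 * lc * \<omega> pc - lc * pc * deriv \<omega> pc" by (rule DERIV_imp_deriv[OF dD])
  finally have G2: "Gs $ 2 = (- 2 * lc * \<omega> pc - lc * pc * deriv \<omega> pc) / 2"
    by (simp add: Gs_def fps_expansion_def numeral_2_eq_2)
  have nz: "1 + lc * pc^2 * \<omega> pc \<noteq> 0"
  proof
    assume "1 + lc * pc^2 * \<omega> pc = 0"
    hence "norm (lc * pc^2 * \<omega> pc) = 1" by (metis add_eq_0_iff norm_minus_cancel norm_one)
    moreover have "norm (lc * pc^2 * \<omega> pc) < 1"
    proof -
      have "norm (lc * pc^2 * \<omega> pc) = lam * p^2 * norm (\<omega> pc)"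
        using lam p by (simp add: lc_def pc_def norm_mult norm_power)
      also have "\<dots> \<le> lam * p^2" using wp lam p by (simp add: pc_def mult_left_le)
      also have "\<dots> < 1" using lam p by (rule lp_lt1)
      finally show ?thesis .
    qed
    ultimately show False by simp
  qed
  have G1': "Gs $ 1 = - (1 + lc * pc^2 * \<omega> pc) / pc"
    using G1 pc0 by (simp add: field_simps power2_eq_square)
  have G1nz: "Gs $ 1 \<noteq> 0" by (metis G1' nz pc0 divide_eq_0_iff neg_equal_0_iff_equal)
  have "b0 lam p \<omega> = (Gs $ 1 - pc * Gs $ 2) / (Gs $ 1)^2"
    using b0eq coeff_lemma[OF G0 G1nz] by simp
  also have "\<dots> = pc * (-1 + lc * pc ^ 3 * deriv \<omega> pc / 2) / (1 + lc * pc ^ 2 * \<omega> pc)^2"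
  proof -
    define L where "L = lc * pc ^ 2 * \<omega> pc"
    define X where "X = -1 + lc * pc ^ 3 * deriv \<omega> pc / 2"
    have num: "Gs $ 1 - pc * Gs $ 2 = X / pc"
      unfolding G1 G2 X_def using pc0 by (simp add: field_simps power2_eq_square power3_eq_cube)
    have den: "(Gs $ 1)^2 = (1 + L)^2 / pc^2"
      unfolding G1' L_def by (simp add: power_divide power2_eq_square algebra_simps)
    have L0: "1 + L \<noteq> 0" using nz by (simp add: L_def)
    have "X / pc / ((1 + L)^2 / pc^2) = pc * X / (1 + L)^2"
      using pc0 L0 by (simp add: field_simps power2_eq_square)
    thus ?thesis unfolding num den by (simp add: X_def L_def)
  qed
  finally show ?thesis by (simp add: pc_def lc_def)
qed
lemma moeb_eq: "Moebius_function 0 w z = (z - w) / (1 - cnj w * z)"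
  by (simp add: Moebius_function_def)

lemma schwarz_pick_real:
  fixes \<omega> :: "complex \<Rightarrow> complex" and p :: real
  assumes hol: "\<omega> holomorphic_on ball 0 1"
    and bnd: "\<forall>z\<in>ball 0 1. norm (\<omega> z) \<le> 1"
    and p: "0 \<le> p" "p < 1"
  shows "norm (deriv \<omega> (of_real p)) * (1 - p^2) \<le> 1 - norm (\<omega> (of_real p))^2"
proof (cases "\<exists>z\<in>ball 0 1. norm (\<omega> z) = 1")
  case True
  then obtain z where z: "z \<in> ball 0 1" "norm (\<omega> z) = 1" by blast
  have "\<omega> constant_on ball 0 1"
  proof (rule Schwarz2[OF hol, of "1 - norm z" z])
    show "0 < 1 - norm z" using z by simp
    show "ball z (1 - cmod z) \<subseteq> ball 0 1"
      by (simp add: ball_subset_ball_iff)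
    fix u assume "norm (z - u) < 1 - norm z"
    hence "u \<in> ball 0 1" using norm_triangle_ineq2[of u z] 
      by (simp add: norm_minus_commute)
    thus "norm (\<omega> u) \<le> norm (\<omega> z)" using bnd z by simp
  qed
  then obtain c where c: "\<And>u. u \<in> ball 0 1 \<Longrightarrow> \<omega> u = c" by (auto simp: constant_on_def)
  have pin: "of_real p \<in> ball (0::complex) 1" using p by simp
  have ev: "eventually (\<lambda>u. \<omega> u = c) (nhds (of_real p))"
    using c pin by (intro eventually_nhds_in_open[THEN eventually_mono, of "ball 0 1"]) auto
  have "deriv \<omega> (of_real p) = deriv (\<lambda>_. c) (of_real p)"
    by (rule deriv_cong_ev[OF ev refl])
  hence "deriv \<omega> (of_real p) = 0" by simp
  moreover have "norm (\<omega> (of_real p)) \<le> 1" using bnd pin by blast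
  ultimately show ?thesis
    by (simp add: power_le_one)
next
  case False
  hence lt: "\<And>z. z \<in> ball 0 1 \<Longrightarrow> norm (\<omega> z) < 1" using bnd by force
  define pc where "pc = (of_real p :: complex)"
  have pin: "pc \<in> ball 0 1" using p by (simp add: pc_def)
  define w where "w = \<omega> pc"
  have w1: "norm w < 1" using lt pin w_def by blast
  define M1 where "M1 = (\<lambda>z. (z + pc) / (1 + pc * z))"
  define M2 where "M2 = (\<lambda>u. (u - w) / (1 - cnj w * u))"
  have M1eq: "M1 z = Moebius_function 0 (-pc) z" for z
    by (simp add: M1_def moeb_eq pc_def)
  have M2eq: "M2 u = Moebius_function 0 w u" for u
    by (simp add: M2_def moeb_eq)
  define \<phi> where "\<phi> = (\<lambda>z. M2 (\<omega> (M1 z)))"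
  have M1in: "M1 z \<in> ball 0 1" if "z \<in> ball 0 1" for z
    using that pin by (simp add: M1eq Moebius_function_norm_lt_1)
  have holM1: "M1 holomorphic_on ball 0 1"
    unfolding M1eq[abs_def] using pin by (intro Moebius_function_holomorphic) simp
  have holM2: "M2 holomorphic_on ball 0 1"
    unfolding M2eq[abs_def] using w1 by (intro Moebius_function_holomorphic) simp
  have hol\<phi>: "\<phi> holomorphic_on ball 0 1"
    unfolding \<phi>_def
    apply (rule holomorphic_on_compose_gen[OF _ holM2, unfolded o_def])
     apply (rule holomorphic_on_compose_gen[OF holM1 hol, unfolded o_def])
    using M1in lt by auto
  have \<phi>0: "\<phi> 0 = 0" by (simp add: \<phi>_def M1_def M2_def w_def)
  have \<phi>lt: "norm (\<phi> z) < 1" if "norm z < 1" for z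
    unfolding \<phi>_def M2eq using w1 lt M1in that by (intro Moebius_function_norm_lt_1) auto
  have S: "norm (deriv \<phi> 0) \<le> 1"
    using Schwarz_Lemma(2)[OF hol\<phi> \<phi>0 \<phi>lt, of 0] by simp
  define d where "d = deriv \<omega> pc"
  have d1: "(M1 has_field_derivative (1 - pc^2)) (at 0)"
    unfolding M1_def by (auto intro!: derivative_eq_intros simp: power2_eq_square)
  have "\<omega> field_differentiable at pc"
    using hol pin holomorphic_on_imp_differentiable_at by blast
  hence d2: "(\<omega> has_field_derivative d) (at (M1 0))"
    by (simp add: M1_def d_def DERIV_deriv_iff_field_differentiable)
  have nz: "1 - cnj w * w \<noteq> 0"
  proof
    assume "1 - cnj w * w = 0"
    hence "norm (cnj w * w) = 1" by (metis eq_iff_diff_eq_0 norm_one)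
    thus False using w1 by (simp add: norm_mult) (metis mult_strict_mono norm_ge_zero mult_1_right less_irrefl less_eq_real_def zero_less_one)
  qed
  have e: "\<omega> (M1 0) = w" by (simp add: M1_def w_def)
  have d3': "(M2 has_field_derivative 1 / (1 - cnj w * w)) (at w)"
    unfolding M2_def
    apply (rule derivative_eq_intros refl | simp add: nz)+
    using nz apply simp
    apply (simp only: diff_self mult_zero_left diff_zero mult_1_left)
    using nz by (metis divide_divide_eq_left div_self)
  have d3: "(M2 has_field_derivative 1 / (1 - cnj w * w)) (at (\<omega> (M1 0)))"
    using d3' e by simp
  have "(\<phi> has_field_derivative (1 / (1 - cnj w * w)) * (d * (1 - pc^2))) (at 0)"
  proof -
    have i: "((\<lambda>z. \<omega> (M1 z)) has_field_derivative d * (1 - pc^2)) (at 0)"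
      using DERIV_chain2[where f=\<omega> and g=M1, OF d2 d1] .
    show ?thesis unfolding \<phi>_def
      using DERIV_chain2[where f=M2 and g="\<lambda>z. \<omega> (M1 z)", OF d3 i] .
  qed
  hence "deriv \<phi> 0 = d * (1 - pc^2) / (1 - cnj w * w)" by (simp add: DERIV_imp_deriv)
  with S have A: "norm (d * (1 - pc^2)) \<le> norm (1 - cnj w * w)"
    using nz by (simp add: norm_divide divide_le_eq)
  have B: "1 - cnj w * w = of_real (1 - norm w ^ 2)"
    by (simp add: complex_norm_square mult.commute del: of_real_power)
  have C: "1 - pc^2 = of_real (1 - p^2)" by (simp add: pc_def)
  have D: "1 - norm w ^2 \<ge> 0" "1 - p^2 \<ge> 0" using w1 p
    by (simp_all add: power_le_one abs_square_le_1)
  have "norm d * (1 - p^2) \<le> 1 - norm w ^ 2"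
    using A D unfolding B C norm_mult norm_of_real by simp
  thus ?thesis by (simp add: d_def w_def pc_def)
qed

lemma fracle:
  fixes a b c d :: real
  assumes "b > 0" "d > 0" "a * d \<le> c * b"
  shows "a / b \<le> c / d"
proof -
  have "a \<le> (c * b) / d" using assms by (simp add: pos_le_divide_eq)
  hence "a \<le> (c / d) * b" by simp
  thus ?thesis using assms by (simp add: pos_divide_le_eq)
qed

lemma ineq_a:
  fixes u r p A :: real
  assumes "0 < u" "u < 1" "0 \<le> r" "r \<le> 1" "0 < p" "p \<le> A"
  shows "(A - u*p*r^2)/(1-u*r)^2 \<le> (A - u*p)/(1-u)^2"
proof -
  have ur: "u * r \<le> u" using mult_left_mono[of r 1 u] assms by simp
  have "1 - u*r > 0" "1 - u > 0" using assms ur by linarith+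
  hence d1: "(1-u*r)^2 > 0" "(1-u)^2 > 0" by auto
  have id: "(A - u*p)*(1-u*r)^2 - (A - u*p*r^2)*(1-u)^2
      = u*(1-r)*(A*(2-u-u*r) - p*(1+r-2*u*r))"
    by (simp add: algebra_simps power2_eq_square)
  have "A*(2-u-u*r) \<ge> p*(2-u-u*r)"
    using assms ur by (intro mult_right_mono) linarith+
  moreover have "p*(2-u-u*r) - p*(1+r-2*u*r) = p*((1-u)*(1-r))"
    by (simp add: algebra_simps)
  moreover have "p*((1-u)*(1-r)) \<ge> 0" using assms by simp
  ultimately have "A*(2-u-u*r) - p*(1+r-2*u*r) \<ge> 0" by linarith
  hence "u*(1-r)*(A*(2-u-u*r) - p*(1+r-2*u*r)) \<ge> 0" using assms by simp
  hence "(A - u*p*r^2)*(1-u)^2 \<le> (A - u*p)*(1-u*r)^2" using id by linarith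
  thus ?thesis using d1 by (intro fracle) auto
qed

lemma ineq_b:
  fixes u r p c :: real
  assumes "0 < u" "0 < p" "0 < 1 - u*c" "0 < 1 - u*r"
  shows "(p*c - u*p*r^2)/(1-u*r)^2 \<le> p*c/(1 - u*c)"
proof -
  have id: "p*c*(1-u*r)^2 - (p*c - u*p*r^2)*(1-u*c) = u*p*(c-r)^2"
    by (simp add: algebra_simps power2_eq_square)
  have "u*p*(c-r)^2 \<ge> 0" using assms by simp
  hence "(p*c - u*p*r^2)*(1-u*c) \<le> p*c*(1-u*r)^2" using id by linarith
  moreover have "(1-u*r)^2 > 0" using assms by simp
  ultimately show ?thesis using assms by (intro fracle) auto
qed


lemma b0_bound:
  fixes lam p :: real and \<omega> :: "complex \<Rightarrow> complex"
  assumes lam: "0 < lam" "lam < 1"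
    and p: "0 < p" "p < 1"
    and hol: "\<omega> holomorphic_on ball 0 1"
    and bnd: "\<forall>z\<in>ball 0 1. norm (\<omega> z) \<le> 1"
  shows "norm (b0 lam p \<omega>) \<le> p / (2 * (1 - p^2)) *
     (((lam * p^3 - 2 * p^2 + 2) - (lam * p^2) * p * (norm (\<omega> (of_real p)))^2)
        / (1 - (lam * p^2) * norm (\<omega> (of_real p)))^2)"
    and "norm (\<omega> (of_real p)) \<le> 1"
proof -
  define pc where "pc = (of_real p :: complex)"
  define lc where "lc = (of_real lam :: complex)"
  have pin: "pc \<in> ball 0 1" using p by (simp add: pc_def)
  define w where "w = \<omega> pc"
  define d where "d = deriv \<omega> pc"
  define r where "r = norm w"
  define \<delta> where "\<delta> = norm d"
  have r1: "r \<le> 1" using bnd pin by (simp add: r_def w_def)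
  thus "norm (\<omega> (of_real p)) \<le> 1" by (simp add: r_def w_def pc_def)
  have r0: "0 \<le> r" by (simp add: r_def)
  have SP: "\<delta> * (1 - p^2) \<le> 1 - r^2"
    using schwarz_pick_real[OF hol bnd, of p] p by (simp add: \<delta>_def d_def r_def w_def pc_def)
  have p2: "0 < 1 - p^2" using p by (simp add: abs_square_less_1)
  have \<delta>le: "\<delta> \<le> (1 - r^2) / (1 - p^2)" using SP p2 by (simp add: pos_le_divide_eq)
  have b: "b0 lam p \<omega> = pc * (-1 + lc * pc ^ 3 * d / 2) / (1 + lc * pc ^ 2 * w)^2"
    using b0_formula[OF lam p hol] r1 by (simp add: pc_def lc_def d_def w_def r_def)
  have N: "norm (-1 + lc * pc ^ 3 * d / 2) \<le> 1 + lam * p^3 * \<delta> / 2"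
  proof -
    have "norm (-1 + lc * pc ^ 3 * d / 2) \<le> norm (-1::complex) + norm (lc * pc ^ 3 * d / 2)"
      by (rule norm_triangle_ineq)
    also have "norm (lc * pc ^ 3 * d / 2) = lam * p^3 * \<delta> / 2"
      using lam p by (simp add: lc_def pc_def \<delta>_def norm_mult norm_power norm_divide)
    finally show ?thesis by simp
  qed
  have N': "1 + lam * p^3 * \<delta> / 2 \<le> 1 + lam * p^3 * ((1 - r^2) / (1 - p^2)) / 2"
  proof -
    have "lam * p^3 * \<delta> \<le> lam * p^3 * ((1 - r^2) / (1 - p^2))"
      using \<delta>le lam p by (intro mult_left_mono) auto
    thus ?thesis by (intro add_left_mono divide_right_mono) auto
  qed
  have ulr: "lam * p^2 * r \<le> lam * p^2"
    using r1 lam p by (simp add: mult_left_le)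
  have u1: "lam * p^2 < 1" using lam p
    by (rule lp_lt1)
  have M: "1 - lam * p^2 * r \<le> norm (1 + lc * pc ^ 2 * w)"
  proof -
    have "norm (1::complex) - norm (lc * pc ^ 2 * w) \<le> norm (1 + lc * pc ^ 2 * w)"
      by (rule norm_diff_ineq)
    moreover have "norm (lc * pc ^ 2 * w) = lam * p^2 * r"
      using lam p by (simp add: lc_def pc_def r_def norm_mult norm_power)
    ultimately show ?thesis by simp
  qed
  have Mpos: "0 < 1 - lam * p^2 * r" using ulr u1 by linarith
  have "norm (b0 lam p \<omega>) = p * norm (-1 + lc * pc ^ 3 * d / 2) / (norm (1 + lc * pc ^ 2 * w))^2"
    using p by (simp add: b norm_mult norm_divide norm_power pc_def)
  also have "\<dots> \<le> p * (1 + lam * p^3 * ((1 - r^2) / (1 - p^2)) / 2) / (1 - lam * p^2 * r)^2"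
  proof (rule frac_le)
    show "0 \<le> p * (1 + lam * p^3 * ((1 - r^2) / (1 - p^2)) / 2)"
      using p lam p2 r1 r0 by (simp add: power_le_one)
    show "p * norm (-1 + lc * pc ^ 3 * d / 2) \<le> p * (1 + lam * p^3 * ((1 - r^2) / (1 - p^2)) / 2)"
    proof -
      have "norm (-1 + lc * pc ^ 3 * d / 2) \<le> 1 + lam * p^3 * ((1 - r^2) / (1 - p^2)) / 2"
        using N N' by (rule order_trans)
      thus ?thesis using p by (intro mult_left_mono) auto
    qed
    show "0 < (1 - lam * p^2 * r)^2" using Mpos by simp
    show "(1 - lam * p^2 * r)^2 \<le> (norm (1 + lc * pc ^ 2 * w))^2"
      using M Mpos by (intro power_mono) auto
  qed
  also have "\<dots> = p / (2 * (1 - p^2)) *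
     (((lam * p^3 - 2 * p^2 + 2) - (lam * p^2) * p * r^2) / (1 - (lam * p^2) * r)^2)"
    using p2 by (simp add: field_simps power2_eq_square power3_eq_cube)
  finally show "norm (b0 lam p \<omega>) \<le> p / (2 * (1 - p^2)) *
     (((lam * p^3 - 2 * p^2 + 2) - (lam * p^2) * p * (norm (\<omega> (of_real p)))^2)
        / (1 - (lam * p^2) * norm (\<omega> (of_real p)))^2)"
    by (simp add: r_def w_def pc_def)
qed


lemma gen1:
  fixes p X U W :: real
  assumes "U \<noteq> 0"
  shows "p * (X * U / W) / U^2 = p / W * (X / U)"
  using assms by (simp add: power2_eq_square)

lemma const_case:
  fixes lam p :: real
  assumes lam: "0 < lam" "lam < 1" and p: "0 < p" "p < 1"
  shows "norm (b0 lam p (\<lambda>_. -1)) = p / (1 - lam * p^2)^2"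
proof -
  have "b0 lam p (\<lambda>_. -1) = of_real p * (-1 + of_real lam * of_real p ^ 3 * deriv (\<lambda>_. -1) (of_real p) / 2)
           / (1 + of_real lam * of_real p ^ 2 * (-1))^2"
    using b0_formula[OF lam p, of "\<lambda>_. -1"] by simp
  also have "\<dots> = - of_real (p / (1 - lam * p^2)^2)" by simp
  finally have "b0 lam p (\<lambda>_. -1) = - of_real (p / (1 - lam * p^2)^2)" .
  hence "norm (b0 lam p (\<lambda>_. -1)) = \<bar>p / (1 - lam * p^2)^2\<bar>"
    by (simp only: norm_minus_cancel norm_of_real)
  thus ?thesis using p by simp
qed

lemma case_iii:
  fixes lam p :: real
  assumes lam: "0 < lam" "lam < 1" and p: "0 < p" "p < 1"
    and A: "lam * p^3 - 2 * p^2 + 2 < p"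
  shows "\<exists>a::real. -p < a \<and> a < 1 \<and>
            (a + p) / (1 + a * p) = (2 - 2 * p^2 + lam * p^3) / p \<and>
            norm (b0 lam p (\<lambda>z. - (of_real a + z) / (1 + of_real a * z))) =
              p / (2 * (1 - p^2)) * ((lam * p^3 - 2 * p^2 + 2) / (1 - lam * p * (lam * p^3 - 2 * p^2 + 2)))"
proof -
  define c where "c = (2 - 2 * p^2 + lam * p^3) / p"
  have p2: "0 < 1 - p^2" using p by (simp add: abs_square_less_1)
  have Apos: "0 < 2 - 2 * p^2 + lam * p^3"
  proof -
    have "0 < lam * p^3" using lam p by simp
    thus ?thesis using p2 by linarith
  qed
  have c0: "0 < c" using Apos p by (simp add: c_def)
  have c1: "c < 1" using A p by (simp add: c_def divide_less_eq)
  have cp: "0 < 1 - c * p"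
  proof -
    have "c * p \<le> c * 1" using c0 p by (intro mult_left_mono) auto
    thus ?thesis using c1 by linarith
  qed
  define a where "a = (c - p) / (1 - c * p)"
  have am: "-p < a"
  proof -
    have e: "(c - p) - (-p) * (1 - c * p) = c * (1 - p^2)"
      by (simp add: algebra_simps power2_eq_square)
    have "c * (1 - p^2) > 0" using c0 p2 by simp
    hence "-p * (1 - c * p) < c - p" using e by linarith
    thus ?thesis unfolding a_def using cp by (simp add: pos_less_divide_eq)
  qed
  have a1: "a < 1"
  proof -
    have e: "(1 - c * p) - (c - p) = (1 - c) * (1 + p)"
      by (simp add: algebra_simps)
    have "(1 - c) * (1 + p) > 0" using c1 p by simp
    hence "c - p < 1 - c * p" using e by linarith
    thus ?thesis unfolding a_def using cp by (simp add: pos_divide_less_eq)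
  qed
  have ap: "0 < 1 + a * p"
  proof -
    have "1 + a * p = (1 - p^2) / (1 - c * p)" using cp by (simp add: a_def field_simps power2_eq_square)
    thus ?thesis using p2 cp by simp
  qed
  have apc: "a + p = c * (1 - p^2) / (1 - c * p)"
    using cp by (simp add: a_def field_simps power2_eq_square)
  have ap2: "1 + a * p = (1 - p^2) / (1 - c * p)"
    using cp by (simp add: a_def field_simps power2_eq_square)
  have hc: "(a + p) / (1 + a * p) = c"
    unfolding apc ap2 using cp p2 by simp
  have aabs: "\<bar>a\<bar> < 1" using am a1 p by auto
  define \<omega> where "\<omega> = (\<lambda>z::complex. - (of_real a + z) / (1 + of_real a * z))"
  have nz: "1 + of_real a * z \<noteq> 0" if "z \<in> ball 0 1" for z :: complex
  proof
    assume "1 + of_real a * z = 0"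
    hence "norm (of_real a * z) = 1" by (metis add_eq_0_iff norm_minus_cancel norm_one)
    moreover have "norm (of_real a * z) < 1" using that aabs
      by (simp add: norm_mult) (metis abs_ge_zero mult_strict_mono' mult_1_right norm_ge_zero)
    ultimately show False by simp
  qed
  have hol: "\<omega> holomorphic_on ball 0 1"
    unfolding \<omega>_def using nz by (auto intro!: holomorphic_intros)
  have meq: "\<omega> z = - Moebius_function 0 (- of_real a) z" for z
  proof -
    have "- Moebius_function 0 (- of_real a) z = - ((z + of_real a) / (1 + of_real a * z))"
      by (simp add: moeb_eq)
    also have "\<dots> = - (of_real a + z) / (1 + of_real a * z)"
      by (simp only: minus_divide_left add.commute)
    finally show ?thesis by (simp only: \<omega>_def)
  qed
  have bnd: "\<forall>z\<in>ball 0 1. norm (\<omega> z) \<le> 1"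
  proof
    fix z :: complex assume "z \<in> ball 0 1"
    hence "norm (Moebius_function 0 (- of_real a) z) < 1"
      using aabs by (intro Moebius_function_norm_lt_1) auto
    thus "norm (\<omega> z) \<le> 1" by (simp add: meq)
  qed
  define pc where "pc = (of_real p :: complex)"
  have pin: "pc \<in> ball 0 1" using p by (simp add: pc_def)
  have apc: "1 + of_real a * pc = of_real (1 + a * p)" by (simp add: pc_def)
  have wv: "\<omega> pc = - of_real c"
  proof -
    have e1: "of_real a + pc = of_real (a + p)" by (simp add: pc_def)
    have "\<omega> pc = - (of_real a + pc) / (1 + of_real a * pc)" by (simp only: \<omega>_def)
    also have "\<dots> = - of_real ((a + p) / (1 + a * p))"
      by (simp only: e1 apc minus_divide_left of_real_divide)
    finally show ?thesis by (simp only: hc)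
  qed
  have dfull: "(\<omega> has_field_derivative
      ((- (0 + 1)) * (1 + of_real a * pc) - (- (of_real a + pc)) * (0 + of_real a * 1))
        / ((1 + of_real a * pc) * (1 + of_real a * pc))) (at pc)"
    unfolding \<omega>_def
    by (rule DERIV_divide[OF DERIV_minus[OF DERIV_add[OF DERIV_const DERIV_ident]]
                             DERIV_add[OF DERIV_const DERIV_cmult[OF DERIV_ident]] nz[OF pin]])
  have num: "(- (0 + 1)) * (1 + of_real a * pc) - (- (of_real a + pc)) * (0 + of_real a * 1)
      = (of_real (- (1 - a^2)) :: complex)"
    by (simp add: pc_def algebra_simps power2_eq_square)
  have den: "(1 + of_real a * pc) * (1 + of_real a * pc) = (of_real ((1 + a * p)^2) :: complex)"
    by (simp add: pc_def power2_eq_square)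
  have "(\<omega> has_field_derivative of_real (- (1 - a^2) / (1 + a * p)^2)) (at pc)"
    using dfull unfolding num den of_real_divide .
  hence dv: "deriv \<omega> pc = of_real (- (1 - a^2) / (1 + a * p)^2)"
    by (rule DERIV_imp_deriv)
  have key: "(1 - a^2) / (1 + a*p)^2 = (1 - c^2) / (1 - p^2)"
  proof -
    have ap0: "1 + a * p \<noteq> 0" using ap by simp
    have e: "(1 + a*p)^2 - (a + p)^2 = (1 - a^2) * (1 - p^2)"
      by (simp add: algebra_simps power2_eq_square)
    have "1 - c^2 = ((1 + a*p)^2 - (a + p)^2) / (1 + a*p)^2"
      unfolding hc[symmetric] using ap0 by (simp add: power_divide diff_divide_distrib)
    also have "\<dots> = (1 - a^2) * (1 - p^2) / (1 + a*p)^2" by (simp only: e)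
    finally have "1 - c^2 = (1 - a^2) * (1 - p^2) / (1 + a*p)^2" .
    thus ?thesis using p2 by simp
  qed
  have "b0 lam p \<omega> = pc * (-1 + of_real lam * pc ^ 3 * deriv \<omega> pc / 2) / (1 + of_real lam * pc ^ 2 * \<omega> pc)^2"
    using b0_formula[OF lam p hol] bnd pin by (simp add: pc_def)
  also have "\<dots> = of_real (p * (-1 + lam * p^3 * (- (1 - a^2) / (1 + a * p)^2) / 2) / (1 + lam * p^2 * (- c))^2)"
    unfolding dv wv by (simp add: pc_def)
  finally have bX: "b0 lam p \<omega> = of_real (p * (-1 + lam * p^3 * (- (1 - a^2) / (1 + a * p)^2) / 2) / (1 + lam * p^2 * (- c))^2)" .
  define Q where "Q = (1 - c^2) / (1 - p^2)"
  define Y where "Y = p * (1 + lam * p^3 * Q / 2) / (1 - lam * p^2 * c)^2"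
  have mq: "- (1 - a^2) / (1 + a * p)^2 = - Q"
    unfolding Q_def key[symmetric] by (rule minus_divide_left[symmetric])
  have n1: "p * (-1 + lam * p^3 * (- Q) / 2) = - (p * (1 + lam * p^3 * Q / 2))"
    by (simp add: algebra_simps)
  have d1: "(1 + lam * p^2 * (- c))^2 = (1 - lam * p^2 * c)^2"
    by (simp add: algebra_simps)
  have XY: "p * (-1 + lam * p^3 * (- (1 - a^2) / (1 + a * p)^2) / 2) / (1 + lam * p^2 * (- c))^2 = - Y"
    unfolding mq n1 d1 Y_def by (rule minus_divide_left[symmetric])
  have Q0: "0 \<le> Q" unfolding Q_def using p2 c0 c1
    by (intro divide_nonneg_pos) (auto simp: abs_square_le_1 less_imp_le)
  have Y0: "0 \<le> Y" unfolding Y_def using p lam Q0 by simp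
  have bv: "norm (b0 lam p \<omega>) = p * (1 + lam * p^3 * ((1 - c^2) / (1 - p^2)) / 2) / (1 - lam * p^2 * c)^2"
  proof -
    have "norm (b0 lam p \<omega>) = \<bar>- Y\<bar>" unfolding bX XY norm_of_real ..
    also have "\<dots> = Y" using Y0 by simp
    finally show ?thesis by (simp add: Y_def Q_def)
  qed
  have Ac: "lam * p^3 - 2 * p^2 + 2 = p * c" using p by (simp add: c_def)
  have uc: "0 < 1 - lam * p^2 * c"
  proof -
    have "lam * p^2 * c \<le> lam * p^2" using c1 lam p by (simp add: mult_left_le)
    moreover have "lam * p^2 < 1" using lam p
      by (rule lp_lt1)
    ultimately show ?thesis by linarith
  qed
  have "p * (1 + lam * p^3 * ((1 - c^2) / (1 - p^2)) / 2) / (1 - lam * p^2 * c)^2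
     = p / (2 * (1 - p^2)) * ((p * c) / (1 - lam * p * (p * c)))"
  proof -
    have "2 * (1 - p^2) + lam * p^3 * (1 - c^2) = p * c * (1 - lam * p^2 * c)"
      using Ac by (simp add: algebra_simps power2_eq_square power3_eq_cube)
    note idt = this
    have p2n: "1 - p^2 \<noteq> 0" using p2 by simp
    have ucn: "1 - lam * p^2 * c \<noteq> 0" using uc by simp
    have s1: "1 + lam * p^3 * ((1 - c^2) / (1 - p^2)) / 2
        = (2 * (1 - p^2) + lam * p^3 * (1 - c^2)) / (2 * (1 - p^2))"
      using p2n by (simp add: field_simps)
    have s2: "p * ((p * c * (1 - lam * p^2 * c)) / (2 * (1 - p^2))) / (1 - lam * p^2 * c)^2
        = p / (2 * (1 - p^2)) * ((p * c) / (1 - lam * p^2 * c))"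
      by (rule gen1[OF ucn])
    have s3: "lam * p * (p * c) = lam * p^2 * c" by (simp add: power2_eq_square algebra_simps)
    show ?thesis unfolding s1 idt s2 s3 ..
  qed
  with bv have "norm (b0 lam p \<omega>) = p / (2 * (1 - p^2)) * ((lam * p^3 - 2 * p^2 + 2) / (1 - lam * p * (lam * p^3 - 2 * p^2 + 2)))"
    by (simp only: Ac)
  thus ?thesis using am a1 hc unfolding \<omega>_def c_def by blast
qed

theorem corollary3:
  fixes lam p :: real and \<omega> :: "complex \<Rightarrow> complex"
  assumes lam: "0 < lam" "lam < 1"
    and p: "0 < p" "p < 1"
    and hol: "\<omega> holomorphic_on ball 0 1"
    and bnd: "\<forall>z\<in>ball 0 1. norm (\<omega> z) \<le> 1"
  shows
    "(p \<le> (sqrt 17 - 1) / 4 \<longrightarrow>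
        norm (b0 lam p \<omega>) \<le> p / (1 - lam * p^2)^2 \<and>
        norm (b0 lam p (\<lambda>_. -1)) = p / (1 - lam * p^2)^2)
   \<and> ((sqrt 17 - 1) / 4 < p \<and> (2 * p^2 + p - 2) / p^3 \<le> lam \<longrightarrow>
        norm (b0 lam p \<omega>) \<le> p / (1 - lam * p^2)^2 \<and>
        norm (b0 lam p (\<lambda>_. -1)) = p / (1 - lam * p^2)^2)
   \<and> ((sqrt 17 - 1) / 4 < p \<and> lam < (2 * p^2 + p - 2) / p^3 \<longrightarrow>
        norm (b0 lam p \<omega>) \<le>
          p / (2 * (1 - p^2)) * ((lam * p^3 - 2 * p^2 + 2) / (1 - lam * p * (lam * p^3 - 2 * p^2 + 2)))
      \<and> (\<exists>a::real. -p < a \<and> a < 1 \<and>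
            (a + p) / (1 + a * p) = (2 - 2 * p^2 + lam * p^3) / p \<and>
            norm (b0 lam p (\<lambda>z. - (of_real a + z) / (1 + of_real a * z))) =
              p / (2 * (1 - p^2)) * ((lam * p^3 - 2 * p^2 + 2) / (1 - lam * p * (lam * p^3 - 2 * p^2 + 2)))))"
proof -
  define r where "r = norm (\<omega> (of_real p))"
  define A where "A = lam * p^3 - 2 * p^2 + 2"
  define u where "u = lam * p^2"
  have B: "norm (b0 lam p \<omega>) \<le> p / (2 * (1 - p^2)) * ((A - u * p * r^2) / (1 - u * r)^2)"
    using b0_bound(1)[OF lam p hol bnd] by (simp add: r_def A_def u_def)
  have r1: "r \<le> 1" using b0_bound(2)[OF lam p hol bnd] by (simp add: r_def)
  have r0: "0 \<le> r" by (simp add: r_def)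
  have p2: "0 < 1 - p^2" using p by (simp add: abs_square_less_1)
  have u0: "0 < u" using lam p by (simp add: u_def)
  have u1: "u < 1" using lam p unfolding u_def
    by (rule lp_lt1)
  have ur: "0 < 1 - u * r"
  proof -
    have "u * r \<le> u" using mult_left_mono[of r 1 u] r1 u0 by simp
    thus ?thesis using u1 by linarith
  qed
  have fac: "0 \<le> p / (2 * (1 - p^2))" using p p2 by simp
  have boundA: "norm (b0 lam p \<omega>) \<le> p / (1 - lam * p^2)^2" if "p \<le> A"
  proof -
    have "(A - u * p * r^2) / (1 - u * r)^2 \<le> (A - u * p) / (1 - u)^2"
      by (rule ineq_a) (use u0 u1 r0 r1 p that in auto)
    also have "A - u * p = 2 * (1 - p^2)" by (simp add: A_def u_def power2_eq_square power3_eq_cube)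
    finally have "norm (b0 lam p \<omega>) \<le> p / (2 * (1 - p^2)) * (2 * (1 - p^2) / (1 - u)^2)"
      using B fac by (meson mult_left_mono order_trans)
    also have "\<dots> = p / (1 - lam * p^2)^2" using p2 by (simp add: u_def)
    finally show ?thesis .
  qed
  have cst: "norm (b0 lam p (\<lambda>_. -1)) = p / (1 - lam * p^2)^2" by (rule const_case[OF lam p])
  have p3: "0 < p^3" using p by simp
  have s17: "2 * p^2 + p - 2 \<le> 0" if "p \<le> (sqrt 17 - 1) / 4"
  proof -
    have "4 * p + 1 \<le> sqrt 17" using that by simp
    hence "(4 * p + 1)^2 \<le> (sqrt 17)^2" using p by (intro power_mono) auto
    hence "(4 * p + 1)^2 \<le> 17" by simp
    thus ?thesis by (simp add: power2_eq_square algebra_simps)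
  qed
  have c1: "norm (b0 lam p \<omega>) \<le> p / (1 - lam * p^2)^2" if "p \<le> (sqrt 17 - 1) / 4"
  proof (rule boundA)
    have "0 < lam * p^3" using lam p by simp
    thus "p \<le> A" using s17[OF that] by (simp add: A_def)
  qed
  have c2: "norm (b0 lam p \<omega>) \<le> p / (1 - lam * p^2)^2" if "(2 * p^2 + p - 2) / p^3 \<le> lam"
  proof (rule boundA)
    have "2 * p^2 + p - 2 \<le> lam * p^3" using that p3 by (simp add: pos_divide_le_eq)
    thus "p \<le> A" by (simp add: A_def)
  qed
  have c3: "norm (b0 lam p \<omega>) \<le>
          p / (2 * (1 - p^2)) * ((lam * p^3 - 2 * p^2 + 2) / (1 - lam * p * (lam * p^3 - 2 * p^2 + 2)))
      \<and> (\<exists>a::real. -p < a \<and> a < 1 \<and>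
            (a + p) / (1 + a * p) = (2 - 2 * p^2 + lam * p^3) / p \<and>
            norm (b0 lam p (\<lambda>z. - (of_real a + z) / (1 + of_real a * z))) =
              p / (2 * (1 - p^2)) * ((lam * p^3 - 2 * p^2 + 2) / (1 - lam * p * (lam * p^3 - 2 * p^2 + 2))))"
    if "lam < (2 * p^2 + p - 2) / p^3"
  proof
    have "lam * p^3 < 2 * p^2 + p - 2" using that p3 by (simp add: pos_less_divide_eq)
    hence Ap: "A < p" by (simp add: A_def)
    show "\<exists>a::real. -p < a \<and> a < 1 \<and>
            (a + p) / (1 + a * p) = (2 - 2 * p^2 + lam * p^3) / p \<and>
            norm (b0 lam p (\<lambda>z. - (of_real a + z) / (1 + of_real a * z))) =
              p / (2 * (1 - p^2)) * ((lam * p^3 - 2 * p^2 + 2) / (1 - lam * p * (lam * p^3 - 2 * p^2 + 2)))"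
      by (rule case_iii[OF lam p]) (use Ap in \<open>simp add: A_def\<close>)
    define c where "c = A / p"
    have pc: "p * c = A" using p by (simp add: c_def)
    have "lam * p * A < lam * p * p" using Ap lam p by simp
    also have "\<dots> = u" by (simp add: u_def power2_eq_square)
    finally have "lam * p * A < 1" using u1 by simp
    hence uc: "0 < 1 - u * c" using p by (simp add: u_def c_def power2_eq_square)
    have "(p * c - u * p * r^2) / (1 - u * r)^2 \<le> p * c / (1 - u * c)"
      by (rule ineq_b) (use u0 p uc ur in auto)
    also have "p * c / (1 - u * c) = A / (1 - lam * p * A)"
      using p by (simp add: pc c_def u_def power2_eq_square)
    finally have "(A - u * p * r^2) / (1 - u * r)^2 \<le> A / (1 - lam * p * A)" by (simp add: pc)
    hence "norm (b0 lam p \<omega>) \<le> p / (2 * (1 - p^2)) * (A / (1 - lam * p * A))"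
      using B fac by (meson mult_left_mono order_trans)
    thus "norm (b0 lam p \<omega>) \<le>
          p / (2 * (1 - p^2)) * ((lam * p^3 - 2 * p^2 + 2) / (1 - lam * p * (lam * p^3 - 2 * p^2 + 2)))"
      by (simp add: A_def)
  qed
  show ?thesis
    apply (intro conjI impI)
    subgoal by (rule c1)
    subgoal by (rule cst)
    subgoal by (rule c2) (erule conjE)
    subgoal by (rule cst)
    subgoal by (rule c3[THEN conjunct1]) (erule conjE)
    subgoal by (rule c3[THEN conjunct2]) (erule conjE)
    done
qed

end
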